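(* For integers $d \ge 1$ and $n \ge 0$, $$\mathcal{I}_{d,n} = n^{\underline{d}} \int_{[0,1)^d} \Big[\prod_{j=1}^d (1-x_j)\Big]^{d-1} \Big[1 - \prod_{j=1}^d (1-x_j)\Big]^{n-d} \, dx_1\cdots dx_d,$$ where $n^{\underline{d}} = n(n-1)\cdots(n-d+1)$.
   Context: Let $X^{(1)}, X^{(2)}, \dots$ be i.i.d. random vectors uniformly distributed on $[0,1)^d$. For $x,y\in\mathbb{R}^d$, $x \prec y$ means $x_j<y_j$ for all $j$ and $x \le y$ means $x_j \le y_j$ for all $j$. After $n$ observations, the record-setting region is $S_n := \{x \in [0,1)^d : x \not\prec X^{(i)} \text{ for all } i \in [n]\}$; its generators are the minimal elements of $S_n$ with respect to $\le$; a generator is interior if all its coordinates are nonzero. $\mathcal{I}_{d,n}$ is the expected number of interior generators of $S_n$. (When $n<d$, $n^{\underline d}=0$.) *)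

theory Defs
  imports "HOL-Probability.Probability"
begin

text \<open>Points of [0,1)^d are represented as extensional functions on the index
set {..<d} (as in PiE / PiM).  The n observations form a function
X :: nat => (nat => real), observation i (for i < n) being X i.\<close>

definition unit_cube :: "nat \<Rightarrow> (nat \<Rightarrow> real) set" where
  "unit_cube d = PiE {..<d} (\<lambda>_. {0..<1})"

definition strict_dom :: "nat \<Rightarrow> (nat \<Rightarrow> real) \<Rightarrow> (nat \<Rightarrow> real) \<Rightarrow> bool" where
  "strict_dom d x y \<longleftrightarrow> (\<forall>j<d. x j < y j)"

definition weak_dom :: "nat \<Rightarrow> (nat \<Rightarrow> real) \<Rightarrow> (nat \<Rightarrow> real) \<Rightarrow> bool" where
  "weak_dom d x y \<longleftrightarrow> (\<forall>j<d. x j \<le> y j)"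

definition record_region :: "nat \<Rightarrow> nat \<Rightarrow> (nat \<Rightarrow> nat \<Rightarrow> real) \<Rightarrow> (nat \<Rightarrow> real) set" where
  "record_region d n X = {x \<in> unit_cube d. \<forall>i<n. \<not> strict_dom d x (X i)}"

definition generators :: "nat \<Rightarrow> nat \<Rightarrow> (nat \<Rightarrow> nat \<Rightarrow> real) \<Rightarrow> (nat \<Rightarrow> real) set" where
  "generators d n X = {x \<in> record_region d n X.
      \<forall>y \<in> record_region d n X. weak_dom d y x \<longrightarrow> y = x}"

definition interior_generators :: "nat \<Rightarrow> nat \<Rightarrow> (nat \<Rightarrow> nat \<Rightarrow> real) \<Rightarrow> (nat \<Rightarrow> real) set" where
  "interior_generators d n X = {x \<in> generators d n X. \<forall>j<d. x j \<noteq> 0}"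

definition obs_measure :: "nat \<Rightarrow> nat \<Rightarrow> (nat \<Rightarrow> nat \<Rightarrow> real) measure" where
  "obs_measure d n = PiM {..<n} (\<lambda>_. PiM {..<d} (\<lambda>_. uniform_measure lborel {0..<1::real}))"

definition I_dn :: "nat \<Rightarrow> nat \<Rightarrow> ennreal" where
  "I_dn d n = (\<integral>\<^sup>+ X. of_nat (card (interior_generators d n X)) \<partial>obs_measure d n)"

text \<open>Falling factorial n(n-1)...(n-d+1); equals 0 when n < d.\<close>
definition falling :: "nat \<Rightarrow> nat \<Rightarrow> nat" where
  "falling n d = (\<Prod>i<d. n - i)"

end

theory Submission
  imports Defs
begin

abbreviation U :: "real measure" where "U \<equiv> uniform_measure lborel {0..<1::real}"

lemma ennreal_div1[simp]: "(x::ennreal) / 1 = x"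
  by (simp add: divide_ennreal_def)

lemma prob_U: "prob_space U"
  by (rule prob_space_uniform_measure) auto

lemma space_U[simp]: "space U = UNIV" by simp
lemma sets_U[simp]: "sets U = sets borel" by simp

lemma emeasure_U_gt: assumes "0 \<le> c" "c < 1" shows "emeasure U {c<..} = ennreal (1 - c)"
proof -
  have "{0..<1} \<inter> {c<..} = {c<..<1::real}" using assms by auto
  then show ?thesis using assms by (simp add: emeasure_uniform_measure)
qed

lemma emeasure_U_single: "emeasure U {c} = 0"
proof -
  have "emeasure lborel ({0..<1} \<inter> {c::real}) \<le> emeasure lborel {c}"
    by (intro emeasure_mono) auto
  then show ?thesis by (simp add: emeasure_uniform_measure)
qed

lemma prob_Md: "prob_space (PiM I (\<lambda>_. U))"
  by (intro prob_space_PiM prob_U)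

lemma psf_U: "product_sigma_finite (\<lambda>_::'i. U)"
proof -
  interpret prob_space U by (rule prob_U)
  show ?thesis by unfold_locales
qed

lemma psf_lborel: "product_sigma_finite (\<lambda>_::'i. lborel::real measure)"
  by unfold_locales

lemma emeasure_Md_box:
  assumes "finite I" "\<And>k. k \<in> I \<Longrightarrow> 0 \<le> x k \<and> x k < 1"
  shows "emeasure (PiM I (\<lambda>_. U)) {y \<in> space (PiM I (\<lambda>_. U)). \<forall>k\<in>I. x k < y k}
       = (\<Prod>k\<in>I. ennreal (1 - x k))"
proof -
  interpret product_sigma_finite "\<lambda>_::'a. U" by (rule psf_U)
  have "{y \<in> space (PiM I (\<lambda>_. U)). \<forall>k\<in>I. x k < y k} = PiE I (\<lambda>k. {x k<..})"
    by (auto simp: space_PiM PiE_iff extensional_def)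
  then show ?thesis using assms
    by (simp add: emeasure_PiM emeasure_U_gt del: emeasure_uniform_measure)
qed



lemma distr_curry:
  fixes N :: "'c measure" and I :: "'a set" and J :: "'b set"
  assumes N: "prob_space N" and I: "finite I" and J: "finite J"
  shows "distr (PiM I (\<lambda>_. PiM J (\<lambda>_. N))) (PiM (I \<times> J) (\<lambda>_. N)) (\<lambda>X. \<lambda>p\<in>I \<times> J. X (fst p) (snd p))
     = PiM (I \<times> J) (\<lambda>_. N)"
proof -
  interpret N: prob_space N by fact
  interpret psf: product_sigma_finite "\<lambda>_::'a\<times>'b. N" by unfold_locales
  interpret psfJ: product_sigma_finite "\<lambda>_::'b. N" by unfold_locales
  interpret PJ: prob_space "PiM J (\<lambda>_. N)" by (intro prob_space_PiM) (rule N)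
  interpret psfI: product_sigma_finite "\<lambda>_::'a. PiM J (\<lambda>_. N)" by unfold_locales
  have meas: "(\<lambda>X. \<lambda>p\<in>I \<times> J. X (fst p) (snd p)) \<in> measurable (PiM I (\<lambda>_. PiM J (\<lambda>_. N))) (PiM (I \<times> J) (\<lambda>_. N))"
  proof (rule measurable_restrict)
    fix p assume "p \<in> I \<times> J"
    then show "(\<lambda>X. X (fst p) (snd p)) \<in> measurable (PiM I (\<lambda>_. PiM J (\<lambda>_. N))) N"
    proof -
      have "(\<lambda>X. X (fst p)) \<in> measurable (PiM I (\<lambda>_. PiM J (\<lambda>_. N))) (PiM J (\<lambda>_. N))"
        using \<open>p \<in> I \<times> J\<close> by (auto intro!: measurable_component_singleton)
      moreover have "(\<lambda>y. y (snd p)) \<in> measurable (PiM J (\<lambda>_. N)) N"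
        using \<open>p \<in> I \<times> J\<close> by (auto intro!: measurable_component_singleton)
      ultimately show ?thesis by (rule measurable_compose)
    qed
  qed
  have fin: "finite (I \<times> J)" using I J by simp
  show ?thesis
  proof (rule psf.PiM_eqI[OF fin])
    show "sets (distr (PiM I (\<lambda>_. PiM J (\<lambda>_. N))) (PiM (I \<times> J) (\<lambda>_. N)) (\<lambda>X. \<lambda>p\<in>I \<times> J. X (fst p) (snd p))) = sets (PiM (I \<times> J) (\<lambda>_. N))"
      by simp
    fix A assume A: "\<And>i. i \<in> I \<times> J \<Longrightarrow> A i \<in> sets N"
    have sub: "\<And>i. i \<in> I \<times> J \<Longrightarrow> A i \<subseteq> space N" using A sets.sets_into_space by blast
    have eq: "(\<lambda>X. \<lambda>p\<in>I \<times> J. X (fst p) (snd p)) -` PiE (I \<times> J) A \<inter> space (PiM I (\<lambda>_. PiM J (\<lambda>_. N)))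
        = PiE I (\<lambda>i. PiE J (\<lambda>j. A (i, j)))"
      using sub by (auto simp: space_PiM PiE_iff extensional_def) blast+
    have "emeasure (PiM I (\<lambda>_. PiM J (\<lambda>_. N))) (PiE I (\<lambda>i. PiE J (\<lambda>j. A (i, j))))
        = (\<Prod>i\<in>I. emeasure (PiM J (\<lambda>_. N)) (PiE J (\<lambda>j. A (i, j))))"
      using I J A by (intro psfI.emeasure_PiM) (auto intro!: sets_PiM_I_finite)
    also have "\<dots> = (\<Prod>i\<in>I. \<Prod>j\<in>J. emeasure N (A (i, j)))"
      using J A by (intro prod.cong refl psfJ.emeasure_PiM) auto
    also have "\<dots> = (\<Prod>p\<in>I \<times> J. emeasure N (A p))"
      by (simp add: prod.cartesian_product)
    finally show "emeasure (distr (PiM I (\<lambda>_. PiM J (\<lambda>_. N))) (PiM (I \<times> J) (\<lambda>_. N)) (\<lambda>X. \<lambda>p\<in>I \<times> J. X (fst p) (snd p))) (PiE (I \<times> J) A) = (\<Prod>i\<in>I \<times> J. emeasure N (A i))"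
      using A I J by (subst emeasure_distr[OF meas]) (auto simp: eq intro!: sets_PiM_I_finite)
  qed
qed

lemma nn_integral_curry:
  assumes N: "prob_space N" and I: "finite I" and J: "finite J"
    and f[measurable]: "f \<in> borel_measurable (PiM I (\<lambda>_. PiM J (\<lambda>_. N)))"
  shows "integral\<^sup>N (PiM I (\<lambda>_. PiM J (\<lambda>_. N))) f
     = (\<integral>\<^sup>+ z. f (\<lambda>i\<in>I. \<lambda>j\<in>J. z (i, j)) \<partial>PiM (I \<times> J) (\<lambda>_. N))"
proof -
  have m1: "(\<lambda>X. \<lambda>p\<in>I \<times> J. X (fst p) (snd p)) \<in> measurable (PiM I (\<lambda>_. PiM J (\<lambda>_. N))) (PiM (I \<times> J) (\<lambda>_. N))"
  proof (rule measurable_restrict)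
    fix p assume "p \<in> I \<times> J"
    then show "(\<lambda>X. X (fst p) (snd p)) \<in> measurable (PiM I (\<lambda>_. PiM J (\<lambda>_. N))) N"
    proof -
      have "(\<lambda>X. X (fst p)) \<in> measurable (PiM I (\<lambda>_. PiM J (\<lambda>_. N))) (PiM J (\<lambda>_. N))"
        using \<open>p \<in> I \<times> J\<close> by (auto intro!: measurable_component_singleton)
      moreover have "(\<lambda>y. y (snd p)) \<in> measurable (PiM J (\<lambda>_. N)) N"
        using \<open>p \<in> I \<times> J\<close> by (auto intro!: measurable_component_singleton)
      ultimately show ?thesis by (rule measurable_compose)
    qed
  qed
  have m2: "(\<lambda>z. \<lambda>i\<in>I. \<lambda>j\<in>J. z (i, j)) \<in> measurable (PiM (I \<times> J) (\<lambda>_. N)) (PiM I (\<lambda>_. PiM J (\<lambda>_. N)))"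
    by measurable
  have "(\<integral>\<^sup>+ z. f (\<lambda>i\<in>I. \<lambda>j\<in>J. z (i, j)) \<partial>PiM (I \<times> J) (\<lambda>_. N))
      = (\<integral>\<^sup>+ z. f (\<lambda>i\<in>I. \<lambda>j\<in>J. z (i, j)) \<partial>distr (PiM I (\<lambda>_. PiM J (\<lambda>_. N))) (PiM (I \<times> J) (\<lambda>_. N)) (\<lambda>X. \<lambda>p\<in>I \<times> J. X (fst p) (snd p)))"
    by (simp add: distr_curry[OF N I J])
  also have "\<dots> = (\<integral>\<^sup>+ X. f (\<lambda>i\<in>I. \<lambda>j\<in>J. (\<lambda>p\<in>I \<times> J. X (fst p) (snd p)) (i, j)) \<partial>PiM I (\<lambda>_. PiM J (\<lambda>_. N)))"
    by (rule nn_integral_distr[OF m1]) (simp add: measurable_comp[OF m2 f, unfolded comp_def])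
  also have "\<dots> = integral\<^sup>N (PiM I (\<lambda>_. PiM J (\<lambda>_. N))) f"
  proof (rule nn_integral_cong)
    fix X assume "X \<in> space (PiM I (\<lambda>_. PiM J (\<lambda>_. N)))"
    then have "(\<lambda>i\<in>I. \<lambda>j\<in>J. (\<lambda>p\<in>I \<times> J. X (fst p) (snd p)) (i, j)) = X"
      by (auto simp: space_PiM PiE_iff extensional_def fun_eq_iff)
    then show "f (\<lambda>i\<in>I. \<lambda>j\<in>J. (\<lambda>p\<in>I \<times> J. X (fst p) (snd p)) (i, j)) = f X" by simp
  qed
  finally show ?thesis by simp
qed

lemma nn_integral_reindex:
  assumes N: "prob_space N" and f: "inj_on f I" "f \<in> I \<rightarrow> K"
    and g[measurable]: "g \<in> borel_measurable (PiM I (\<lambda>_. N))"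
  shows "integral\<^sup>N (PiM I (\<lambda>_. N)) g = (\<integral>\<^sup>+ \<omega>. g (\<lambda>n\<in>I. \<omega> (f n)) \<partial>PiM K (\<lambda>_. N))"
proof -
  have m: "(\<lambda>\<omega>. \<lambda>n\<in>I. \<omega> (f n)) \<in> measurable (PiM K (\<lambda>_. N)) (PiM I (\<lambda>_. N))"
    using f by (intro measurable_restrict) (auto intro!: measurable_component_singleton)
  have "integral\<^sup>N (PiM I (\<lambda>_. N)) g = integral\<^sup>N (distr (PiM K (\<lambda>_. N)) (PiM I (\<lambda>_. N)) (\<lambda>\<omega>. \<lambda>n\<in>I. \<omega> (f n))) g"
    using distr_PiM_reindex[of K "\<lambda>_. N" f I] N f by simp
  also have "\<dots> = (\<integral>\<^sup>+ \<omega>. g (\<lambda>n\<in>I. \<omega> (f n)) \<partial>PiM K (\<lambda>_. N))"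
    by (rule nn_integral_distr[OF m]) simp
  finally show ?thesis .
qed

lemma PiM_U_density:
  assumes K: "finite K"
  shows "PiM K (\<lambda>_. U) = density (PiM K (\<lambda>_. lborel)) (indicator (PiE K (\<lambda>_. {0..<1})))"
proof -
  interpret psf: product_sigma_finite "\<lambda>_::'a. U" by (rule psf_U)
  interpret psfl: product_sigma_finite "\<lambda>_::'a. lborel::real measure" by (rule psf_lborel)
  have setsK: "sets (PiM K (\<lambda>_. lborel::real measure)) = sets (PiM K (\<lambda>_. U))"
    by (intro sets_PiM_cong) auto
  show ?thesis
  proof (rule psf.PiM_eqI[symmetric, OF K])
    show "sets (density (PiM K (\<lambda>_. lborel)) (indicator (PiE K (\<lambda>_. {0..<1})))) = sets (PiM K (\<lambda>_. U))"
      using setsK by simp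
    fix A assume A: "\<And>i. i \<in> K \<Longrightarrow> A i \<in> sets U"
    have cube: "PiE K (\<lambda>_. {0..<1::real}) \<in> sets (PiM K (\<lambda>_. lborel))"
      using K by (intro sets_PiM_I_finite) auto
    have box: "PiE K A \<in> sets (PiM K (\<lambda>_. lborel))"
      using K A by (intro sets_PiM_I_finite) auto
    have "emeasure (density (PiM K (\<lambda>_. lborel)) (indicator (PiE K (\<lambda>_. {0..<1})))) (PiE K A)
        = emeasure (PiM K (\<lambda>_. lborel)) (PiE K (\<lambda>_. {0..<1}) \<inter> PiE K A)"
      using cube box
      by (simp add: emeasure_density nn_integral_indicator[symmetric] indicator_inter_arith[symmetric]
          nn_integral_density del: nn_integral_indicator)
    also have "PiE K (\<lambda>_. {0..<1}) \<inter> PiE K A = PiE K (\<lambda>k. {0..<1} \<inter> A k)"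
      by (auto simp: PiE_iff)
    also have "emeasure (PiM K (\<lambda>_. lborel)) \<dots> = (\<Prod>k\<in>K. emeasure lborel ({0..<1} \<inter> A k))"
      using K A by (intro psfl.emeasure_PiM) auto
    also have "\<dots> = (\<Prod>k\<in>K. emeasure U (A k))"
      using A by (intro prod.cong refl) (simp add: emeasure_uniform_measure)
    finally show "emeasure (density (PiM K (\<lambda>_. lborel)) (indicator (PiE K (\<lambda>_. {0..<1})))) (PiE K A) = (\<Prod>k\<in>K. emeasure U (A k))" .
  qed
qed

lemma nn_integral_U_cube:
  assumes K: "finite K" and g[measurable]: "g \<in> borel_measurable (PiM K (\<lambda>_. lborel::real measure))"
  shows "integral\<^sup>N (PiM K (\<lambda>_. U)) g = (\<integral>\<^sup>+ x \<in> PiE K (\<lambda>_. {0..<1}). g x \<partial>PiM K (\<lambda>_. lborel))"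
proof -
  have cube: "PiE K (\<lambda>_. {0..<1::real}) \<in> sets (PiM K (\<lambda>_. lborel))"
    using K by (intro sets_PiM_I_finite) auto
  show ?thesis
    unfolding PiM_U_density[OF K]
    by (subst nn_integral_density) (auto simp: cube mult.commute intro: borel_measurable_indicator)
qed



lemma prod_offdiag:
  fixes c :: "nat \<Rightarrow> 'a::comm_semiring_1"
  shows "(\<Prod>p\<in>{..<d} \<times> {..<d} - (\<lambda>j. (j, j)) ` {..<d}. c (snd p)) = (\<Prod>k<d. c k) ^ (d - 1)"
proof -
  have R: "{..<d} \<times> {..<d} - (\<lambda>j. (j, j)) ` {..<d} = (\<lambda>(k, j). (j, k)) ` (SIGMA k:{..<d}. {..<d} - {k})"
    by (auto simp: image_iff)
  have inj: "inj_on (\<lambda>(k, j). (j, k)) (SIGMA k:{..<d}. {..<d} - {k})"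
    by (auto simp: inj_on_def)
  have "(\<Prod>p\<in>{..<d} \<times> {..<d} - (\<lambda>j. (j, j)) ` {..<d}. c (snd p))
      = (\<Prod>q\<in>(SIGMA k:{..<d}. {..<d} - {k}). c (fst q))"
    unfolding R by (subst prod.reindex[OF inj]) (auto intro!: prod.cong)
  also have "\<dots> = (\<Prod>k<d. \<Prod>j\<in>{..<d} - {k}. c k)"
    by (subst prod.Sigma) (auto simp: case_prod_beta)
  also have "\<dots> = (\<Prod>k<d. c k ^ (d - 1))"
    by (intro prod.cong refl) simp
  also have "\<dots> = (\<Prod>k<d. c k) ^ (d - 1)"
    by (simp add: prod_power_distrib[symmetric])
  finally show ?thesis .
qed


lemma comp1_any:
  "(\<lambda>y. y k :: real) \<in> borel_measurable (PiM J (\<lambda>_. U))"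
proof (cases "k \<in> J")
  case True
  then have "(\<lambda>y. y k) \<in> measurable (PiM J (\<lambda>_. U)) U" by (rule measurable_component_singleton)
  moreover have "measurable (PiM J (\<lambda>_. U)) U = borel_measurable (PiM J (\<lambda>_. U))"
    by (rule measurable_cong_sets) auto
  ultimately show ?thesis by simp
next
  case False
  have "(\<lambda>y. undefined :: real) \<in> borel_measurable (PiM J (\<lambda>_. U))" by (rule borel_measurable_const)
  moreover have "\<And>w. w \<in> space (PiM J (\<lambda>_. U)) \<Longrightarrow> w k = undefined"
    using False by (metis PiE_arb space_PiM)
  ultimately show ?thesis using measurable_cong[of "PiM J (\<lambda>_. U)" "\<lambda>y. y k" "\<lambda>y. undefined" borel] by blast
qed

lemma comp1_any_lborel:
  "(\<lambda>y. y k :: real) \<in> borel_measurable (PiM J (\<lambda>_. lborel))"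
proof (cases "k \<in> J")
  case True
  then have "(\<lambda>y. y k) \<in> measurable (PiM J (\<lambda>_. lborel)) lborel" by (rule measurable_component_singleton)
  moreover have "measurable (PiM J (\<lambda>_. lborel)) lborel = borel_measurable (PiM J (\<lambda>_. lborel))"
    by (rule measurable_cong_sets) auto
  ultimately show ?thesis by simp
next
  case False
  have "(\<lambda>y. undefined :: real) \<in> borel_measurable (PiM J (\<lambda>_. lborel))" by (rule borel_measurable_const)
  moreover have "\<And>w. w \<in> space (PiM J (\<lambda>_. lborel)) \<Longrightarrow> w k = undefined"
    using False by (metis PiE_arb space_PiM)
  ultimately show ?thesis using measurable_cong[of "PiM J (\<lambda>_. lborel)" "\<lambda>y. y k" "\<lambda>y. undefined" borel] by blast
qed

lemma comp2_any:
  fixes J :: "nat set"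
  shows "(\<lambda>W. W j k :: real) \<in> borel_measurable (PiM I (\<lambda>_. PiM J (\<lambda>_. U)))"
proof (cases "j \<in> I")
  case True
  then have "(\<lambda>W. W j) \<in> measurable (PiM I (\<lambda>_. PiM J (\<lambda>_. U))) (PiM J (\<lambda>_. U))" by (rule measurable_component_singleton)
  from measurable_compose[OF this comp1_any] show ?thesis .
next
  case False
  have "(\<lambda>y. (undefined :: nat \<Rightarrow> real) k) \<in> borel_measurable (PiM I (\<lambda>_. PiM J (\<lambda>_. U)))" by (rule borel_measurable_const)
  moreover have "\<And>w. w \<in> space (PiM I (\<lambda>_. PiM J (\<lambda>_. U))) \<Longrightarrow> w j k = (undefined :: nat \<Rightarrow> real) k"
    using False by (metis PiE_arb space_PiM)
  ultimately show ?thesis using measurable_cong[of "PiM I (\<lambda>_. PiM J (\<lambda>_. U))" "\<lambda>W. W j k" "\<lambda>y. (undefined :: nat \<Rightarrow> real) k" borel] by blast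
qed

lemma comp2_N:
  "j \<in> I \<Longrightarrow> k \<in> J \<Longrightarrow> (\<lambda>W. W j k) \<in> measurable (PiM I (\<lambda>_. PiM J (\<lambda>_. N))) N"
proof -
  assume "j \<in> I" "k \<in> J"
  have "(\<lambda>W. W j) \<in> measurable (PiM I (\<lambda>_. PiM J (\<lambda>_. N))) (PiM J (\<lambda>_. N))"
    using \<open>j \<in> I\<close> by (rule measurable_component_singleton)
  moreover have "(\<lambda>y. y k) \<in> measurable (PiM J (\<lambda>_. N)) N"
    using \<open>k \<in> J\<close> by (rule measurable_component_singleton)
  ultimately show ?thesis by (rule measurable_compose)
qed

lemma test1: "(\<lambda>x. (\<Prod>k<d. ennreal (1 - x k)) ^ (d - 1)) \<in> borel_measurable (PiM {..<d} (\<lambda>_. U))"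
  by (intro borel_measurable_power_ennreal borel_measurable_prod_ennreal measurable_compose[OF _ measurable_ennreal] borel_measurable_diff borel_measurable_const comp1_any)



lemma prod_indicator_if:
  assumes "finite R"
  shows "(\<Prod>p\<in>R. indicator (A p) (v p) :: ennreal) = (if \<forall>p\<in>R. v p \<in> A p then 1 else 0)"
  using assms by (auto simp: indicator_def intro!: prod.neutral)

lemma core:
  fixes g :: "(nat \<Rightarrow> real) \<Rightarrow> ennreal"
  assumes gm: "g \<in> borel_measurable (PiM {..<d} (\<lambda>_. U))"
    and g0: "\<And>x. \<not> (\<forall>k<d. 0 \<le> x k \<and> x k < 1) \<Longrightarrow> g x = 0"
  shows "(\<integral>\<^sup>+ W. (if \<forall>j<d. \<forall>k<d. k \<noteq> j \<longrightarrow> W k k < W j k then g (\<lambda>j\<in>{..<d}. W j j) else 0)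
            \<partial>PiM {..<d} (\<lambda>_. PiM {..<d} (\<lambda>_. U)))
       = (\<integral>\<^sup>+ x. g x * (\<Prod>k<d. ennreal (1 - x k)) ^ (d - 1) \<partial>PiM {..<d} (\<lambda>_. U))"
proof -
  interpret psf: product_sigma_finite "\<lambda>_::nat\<times>nat. U" by (rule psf_U)
  define D where "D = (\<lambda>j. (j, j)) ` {..<d}"
  define R where "R = {..<d} \<times> {..<d} - D"
  have finD: "finite D" and finR: "finite R" by (auto simp: D_def R_def)
  have DR: "D \<inter> R = {}" by (auto simp: R_def)
  have PDR: "{..<d} \<times> {..<d} = D \<union> R" by (auto simp: R_def D_def)
  have diagm: "(\<lambda>W. \<lambda>j\<in>{..<d}. W j j) \<in> measurable (PiM {..<d} (\<lambda>_. PiM {..<d} (\<lambda>_. U))) (PiM {..<d} (\<lambda>_. U))"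
    by (intro measurable_restrict comp2_N) auto
  have m1: "(\<lambda>W. if \<forall>j<d. \<forall>k<d. k \<noteq> j \<longrightarrow> W k k < W j k then g (\<lambda>j\<in>{..<d}. W j j) else 0)
      \<in> borel_measurable (PiM {..<d} (\<lambda>_. PiM {..<d} (\<lambda>_. U)))"
    by (rule measurable_If[OF _ _ predE]; (intro pred_intros_countable pred_intros_imp' borel_measurable_pred_less comp2_any borel_measurable_const
      measurable_compose[OF diagm gm])?)
  have "(\<integral>\<^sup>+ W. (if \<forall>j<d. \<forall>k<d. k \<noteq> j \<longrightarrow> W k k < W j k then g (\<lambda>j\<in>{..<d}. W j j) else 0)
            \<partial>PiM {..<d} (\<lambda>_. PiM {..<d} (\<lambda>_. U)))
      = (\<integral>\<^sup>+ z. (if \<forall>j<d. \<forall>k<d. k \<noteq> j \<longrightarrow> z (k, k) < z (j, k) then g (\<lambda>j\<in>{..<d}. z (j, j)) else 0)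
            \<partial>PiM ({..<d} \<times> {..<d}) (\<lambda>_. U))"
    by (subst nn_integral_curry[OF prob_U _ _ m1]) (auto intro!: nn_integral_cong arg_cong[where f=g] simp: restrict_def fun_eq_iff)
  also have "\<dots> = (\<integral>\<^sup>+ u. (\<integral>\<^sup>+ v.
        (if \<forall>j<d. \<forall>k<d. k \<noteq> j \<longrightarrow> merge D R (u, v) (k, k) < merge D R (u, v) (j, k)
         then g (\<lambda>j\<in>{..<d}. merge D R (u, v) (j, j)) else 0) \<partial>PiM R (\<lambda>_. U)) \<partial>PiM D (\<lambda>_. U))"
  proof -
    have diagm2: "(\<lambda>z. \<lambda>j\<in>{..<d}. z (j, j)) \<in> measurable (PiM (D \<union> R) (\<lambda>_. U)) (PiM {..<d} (\<lambda>_. U))"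
      by (intro measurable_restrict measurable_component_singleton) (auto simp: D_def)
    have m2: "(\<lambda>z. if \<forall>j<d. \<forall>k<d. k \<noteq> j \<longrightarrow> z (k, k) < z (j, k) then g (\<lambda>j\<in>{..<d}. z (j, j)) else 0)
      \<in> borel_measurable (PiM (D \<union> R) (\<lambda>_. U))"
      by (rule measurable_If[OF _ _ predE]; (intro pred_intros_countable pred_intros_imp' borel_measurable_pred_less comp1_any borel_measurable_const
        measurable_compose[OF diagm2 gm])?)
    show ?thesis unfolding PDR by (rule psf.product_nn_integral_fold[OF DR finD finR m2])
  qed
  also have "\<dots> = (\<integral>\<^sup>+ u. g (\<lambda>j\<in>{..<d}. u (j, j)) * (\<Prod>k<d. ennreal (1 - u (k, k))) ^ (d - 1) \<partial>PiM D (\<lambda>_. U))"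
  proof (rule nn_integral_cong)
    fix u assume u: "u \<in> space (PiM D (\<lambda>_. U))"
    define du where "du = (\<lambda>j\<in>{..<d}. u (j, j))"
    have mD: "\<And>k. k < d \<Longrightarrow> merge D R (u, v) (k, k) = u (k, k)" for v
      by (auto simp: merge_def D_def)
    have mR: "\<And>j k. j < d \<Longrightarrow> k < d \<Longrightarrow> j \<noteq> k \<Longrightarrow> merge D R (u, v) (j, k) = v (j, k)" for v
      by (auto simp: merge_def D_def R_def)
    have mdiag: "(\<lambda>j\<in>{..<d}. merge D R (u, v) (j, j)) = du" for v
      by (auto simp: du_def mD fun_eq_iff)
    have Rchar: "R = {p. fst p < d \<and> snd p < d \<and> fst p \<noteq> snd p}"
      by (auto simp: R_def D_def)
    have integrand: "(if \<forall>j<d. \<forall>k<d. k \<noteq> j \<longrightarrow> merge D R (u, v) (k, k) < merge D R (u, v) (j, k)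
         then g (\<lambda>j\<in>{..<d}. merge D R (u, v) (j, j)) else 0)
        = g du * (\<Prod>p\<in>R. indicator {u (snd p, snd p)<..} (v p))" for v
    proof -
      have "(\<forall>j<d. \<forall>k<d. k \<noteq> j \<longrightarrow> merge D R (u, v) (k, k) < merge D R (u, v) (j, k))
          \<longleftrightarrow> (\<forall>p\<in>R. v p \<in> {u (snd p, snd p)<..})"
      proof -
        have a: "(\<forall>p\<in>R. v p \<in> {u (snd p, snd p)<..}) \<longleftrightarrow> (\<forall>j<d. \<forall>k<d. k \<noteq> j \<longrightarrow> u (k, k) < v (j, k))"
          by (auto simp: Rchar)
        have b: "(\<forall>j<d. \<forall>k<d. k \<noteq> j \<longrightarrow> merge D R (u, v) (k, k) < merge D R (u, v) (j, k))
           \<longleftrightarrow> (\<forall>j<d. \<forall>k<d. k \<noteq> j \<longrightarrow> u (k, k) < v (j, k))"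
          using mD[of _ v] mR[of _ _ v] by (metis (no_types, lifting))
        show ?thesis using a b by simp
      qed
      then show ?thesis by (simp add: prod_indicator_if[OF finR] mdiag)
    qed
    have ind_m: "\<And>p. p \<in> R \<Longrightarrow> indicator {u (snd p, snd p)<..} \<in> borel_measurable U"
      by (intro borel_measurable_indicator) auto
    have "(\<integral>\<^sup>+ v. (if \<forall>j<d. \<forall>k<d. k \<noteq> j \<longrightarrow> merge D R (u, v) (k, k) < merge D R (u, v) (j, k)
         then g (\<lambda>j\<in>{..<d}. merge D R (u, v) (j, j)) else 0) \<partial>PiM R (\<lambda>_. U))
        = (\<integral>\<^sup>+ v. g du * (\<Prod>p\<in>R. indicator {u (snd p, snd p)<..} (v p)) \<partial>PiM R (\<lambda>_. U))"
      by (simp only: integrand)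
    also have "\<dots> = g du * (\<integral>\<^sup>+ v. (\<Prod>p\<in>R. indicator {u (snd p, snd p)<..} (v p)) \<partial>PiM R (\<lambda>_. U))"
    proof (rule nn_integral_cmult)
      show "(\<lambda>v. \<Prod>p\<in>R. indicator {u (snd p, snd p)<..} (v p) :: ennreal) \<in> borel_measurable (PiM R (\<lambda>_. U))"
      proof (rule borel_measurable_prod_ennreal)
        fix p assume p: "p \<in> R"
        have "(\<lambda>v. v p) \<in> measurable (PiM R (\<lambda>_. U)) U" using p by (rule measurable_component_singleton)
        from measurable_compose[OF this ind_m[OF p]]
        show "(\<lambda>v. indicator {u (snd p, snd p)<..} (v p) :: ennreal) \<in> borel_measurable (PiM R (\<lambda>_. U))" .
      qed
    qed
    also have "\<dots> = g du * (\<Prod>p\<in>R. emeasure U {u (snd p, snd p)<..})"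
      using finR ind_m by (subst psf.product_nn_integral_prod) (auto simp del: emeasure_uniform_measure)
    also have "\<dots> = g du * (\<Prod>k<d. ennreal (1 - u (k, k))) ^ (d - 1)"
    proof (cases "\<forall>k<d. 0 \<le> du k \<and> du k < 1")
      case True
      then have "(\<Prod>p\<in>R. emeasure U {u (snd p, snd p)<..}) = (\<Prod>p\<in>R. ennreal (1 - u (snd p, snd p)))"
        by (intro prod.cong refl emeasure_U_gt) (auto simp: Rchar du_def)
      also have "\<dots> = (\<Prod>k<d. ennreal (1 - u (k, k))) ^ (d - 1)"
        unfolding R_def D_def by (rule prod_offdiag)
      finally show ?thesis by simp
    next
      case False
      then show ?thesis using g0 by simp
    qed
    finally show "(\<integral>\<^sup>+ v. (if \<forall>j<d. \<forall>k<d. k \<noteq> j \<longrightarrow> merge D R (u, v) (k, k) < merge D R (u, v) (j, k)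
         then g (\<lambda>j\<in>{..<d}. merge D R (u, v) (j, j)) else 0) \<partial>PiM R (\<lambda>_. U))
        = g (\<lambda>j\<in>{..<d}. u (j, j)) * (\<Prod>k<d. ennreal (1 - u (k, k))) ^ (d - 1)"
      by (simp add: du_def)
  qed
  also have "\<dots> = (\<integral>\<^sup>+ x. g x * (\<Prod>k<d. ennreal (1 - x k)) ^ (d - 1) \<partial>PiM {..<d} (\<lambda>_. U))"
  proof -
    have hm: "(\<lambda>x. g x * (\<Prod>k<d. ennreal (1 - x k)) ^ (d - 1)) \<in> borel_measurable (PiM {..<d} (\<lambda>_. U))"
      by (intro borel_measurable_times_ennreal gm test1)
    have "(\<integral>\<^sup>+ x. g x * (\<Prod>k<d. ennreal (1 - x k)) ^ (d - 1) \<partial>PiM {..<d} (\<lambda>_. U))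
      = (\<integral>\<^sup>+ \<omega>. g (\<lambda>n\<in>{..<d}. \<omega> (n, n)) * (\<Prod>k<d. ennreal (1 - (\<lambda>n\<in>{..<d}. \<omega> (n, n)) k)) ^ (d - 1) \<partial>PiM D (\<lambda>_. U))"
      by (rule nn_integral_reindex[OF prob_U _ _ hm]) (auto simp: inj_on_def D_def)
    also have "\<dots> = (\<integral>\<^sup>+ u. g (\<lambda>j\<in>{..<d}. u (j, j)) * (\<Prod>k<d. ennreal (1 - u (k, k))) ^ (d - 1) \<partial>PiM D (\<lambda>_. U))"
      by (intro nn_integral_cong arg_cong2[where f="(*)"] refl arg_cong[where f="\<lambda>x. x ^ (d - 1)"] prod.cong) auto
    finally show ?thesis by simp
  qed
  finally show ?thesis .
qed



definition xs :: "nat \<Rightarrow> (nat \<Rightarrow> nat) \<Rightarrow> (nat \<Rightarrow> nat \<Rightarrow> real) \<Rightarrow> (nat \<Rightarrow> real)" where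
  "xs d \<sigma> X = (\<lambda>j\<in>{..<d}. X (\<sigma> j) j)"

definition Gd :: "nat \<Rightarrow> nat \<Rightarrow> (nat \<Rightarrow> nat) \<Rightarrow> (nat \<Rightarrow> nat \<Rightarrow> real) \<Rightarrow> bool" where
  "Gd d n \<sigma> X \<longleftrightarrow> (\<forall>j<d. 0 \<le> X (\<sigma> j) j \<and> X (\<sigma> j) j < 1) \<and>
      (\<forall>j<d. \<forall>k<d. k \<noteq> j \<longrightarrow> X (\<sigma> k) k < X (\<sigma> j) k) \<and>
      (\<forall>i<n. \<not> (\<forall>k<d. X (\<sigma> k) k < X i k))"

definition Sinj :: "nat \<Rightarrow> nat \<Rightarrow> (nat \<Rightarrow> nat) set" where
  "Sinj d n = {\<sigma> \<in> {..<d} \<rightarrow>\<^sub>E {..<n}. inj_on \<sigma> {..<d}}"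

lemma witness:
  assumes x: "x \<in> generators d n X" and j: "j < d" and xj: "x j \<noteq> 0"
  shows "\<exists>i<n. x j = X i j \<and> (\<forall>k<d. k \<noteq> j \<longrightarrow> x k < X i k)"
proof (rule ccontr)
  assume nw: "\<not> ?thesis"
  have xr: "x \<in> record_region d n X" using x by (simp add: generators_def)
  have xc: "x \<in> unit_cube d" using xr by (simp add: record_region_def)
  have x01: "\<And>k. k < d \<Longrightarrow> 0 \<le> x k \<and> x k < 1" using xc by (auto simp: unit_cube_def PiE_iff)
  have xjpos: "0 < x j" using x01[OF j] xj by auto
  define T where "T = {X i j | i. i < n \<and> X i j < x j \<and> (\<forall>k<d. k \<noteq> j \<longrightarrow> x k < X i k)}"
  have finT: "finite T" unfolding T_def by simp
  define c where "c = Max (insert 0 T)"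
  have c0: "0 \<le> c" unfolding c_def using finT by simp
  have cx: "c < x j" unfolding c_def using finT xjpos by (auto simp: T_def)
  have Tc: "\<And>t. t \<in> T \<Longrightarrow> t \<le> c" unfolding c_def using finT by simp
  define y where "y = x(j := c)"
  have c1: "c < 1" using cx x01[OF j] by linarith
  have yc: "y \<in> unit_cube d"
    using xc j c0 c1 by (auto simp: y_def unit_cube_def PiE_iff extensional_def)
  have yr: "y \<in> record_region d n X"
  proof -
    have "\<not> strict_dom d y (X i)" if i: "i < n" for i
    proof
      assume sd: "strict_dom d y (X i)"
      have off: "\<forall>k<d. k \<noteq> j \<longrightarrow> x k < X i k" using sd by (auto simp: strict_dom_def y_def)
      have cj: "c < X i j" using sd j by (auto simp: strict_dom_def y_def)
      have "\<not> strict_dom d x (X i)" using xr i by (simp add: record_region_def)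
      then obtain k where k: "k < d" "\<not> x k < X i k" by (auto simp: strict_dom_def)
      then have "k = j" using off by auto
      with k have le: "X i j \<le> x j" by simp
      show False
      proof (cases "X i j = x j")
        case True
        then have "x j = X i j" by simp
        have "\<exists>i<n. x j = X i j \<and> (\<forall>k<d. k \<noteq> j \<longrightarrow> x k < X i k)"
          using i \<open>x j = X i j\<close> off by (intro exI[of _ i]) simp
        with nw show False by simp
      next
        case False
        then have "X i j \<in> T" using le i off by (auto simp: T_def)
        then show False using Tc cj by fastforce
      qed
    qed
    then show ?thesis using yc by (simp add: record_region_def)
  qed
  have wd: "weak_dom d y x" using cx by (auto simp: weak_dom_def y_def)
  then have "y = x" using x yr by (auto simp: generators_def)
  then show False using cx by (metis fun_upd_same less_irrefl y_def)
qed

lemma IG_image: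
  assumes NZ: "\<forall>i<n. \<forall>j<d. X i j \<noteq> 0"
  shows "interior_generators d n X = (\<lambda>\<sigma>. xs d \<sigma> X) ` {\<sigma> \<in> Sinj d n. Gd d n \<sigma> X}"
proof
  show "(\<lambda>\<sigma>. xs d \<sigma> X) ` {\<sigma> \<in> Sinj d n. Gd d n \<sigma> X} \<subseteq> interior_generators d n X"
  proof safe
    fix \<sigma> assume s: "\<sigma> \<in> Sinj d n" and G: "Gd d n \<sigma> X"
    have sn: "\<And>j. j < d \<Longrightarrow> \<sigma> j < n" using s by (auto simp: Sinj_def)
    let ?x = "xs d \<sigma> X"
    have xv: "\<And>j. j < d \<Longrightarrow> ?x j = X (\<sigma> j) j" by (simp add: xs_def)
    have xc: "?x \<in> unit_cube d" using G by (auto simp: xs_def unit_cube_def Gd_def)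
    have xr: "?x \<in> record_region d n X"
      using xc G by (auto simp: record_region_def strict_dom_def Gd_def xs_def)
    have "?x \<in> generators d n X"
    proof -
      have "y = ?x" if yr: "y \<in> record_region d n X" and wd: "weak_dom d y ?x" for y
      proof -
        have eq: "y j = ?x j" if j: "j < d" for j
        proof (rule ccontr)
          assume "y j \<noteq> ?x j"
          with wd j have lt: "y j < ?x j" by (auto simp: weak_dom_def)
          have "strict_dom d y (X (\<sigma> j))"
            unfolding strict_dom_def
          proof (intro allI impI)
            fix k assume k: "k < d"
            show "y k < X (\<sigma> j) k"
            proof (cases "k = j")
              case True then show ?thesis using lt j by (simp add: xv)
            next
              case False
              have "y k \<le> ?x k" using wd k by (simp add: weak_dom_def)
              also have "\<dots> = X (\<sigma> k) k" using k by (simp add: xv)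
              also have "\<dots> < X (\<sigma> j) k" using G k j False by (auto simp: Gd_def)
              finally show ?thesis .
            qed
          qed
          then show False using yr sn[OF j] by (auto simp: record_region_def)
        qed
        have "y \<in> extensional {..<d}" using yr by (auto simp: record_region_def unit_cube_def PiE_def)
        moreover have "?x \<in> extensional {..<d}" by (simp add: xs_def)
        ultimately show ?thesis using eq by (intro extensionalityI) auto
      qed
      then show ?thesis using xr by (auto simp: generators_def)
    qed
    moreover have "\<forall>j<d. ?x j \<noteq> 0" using NZ sn by (simp add: xv)
    ultimately show "?x \<in> interior_generators d n X" by (simp add: interior_generators_def)
  qed
next
  show "interior_generators d n X \<subseteq> (\<lambda>\<sigma>. xs d \<sigma> X) ` {\<sigma> \<in> Sinj d n. Gd d n \<sigma> X}"
  proof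
    fix x assume x: "x \<in> interior_generators d n X"
    have xg: "x \<in> generators d n X" and nz: "\<forall>j<d. x j \<noteq> 0" using x by (auto simp: interior_generators_def)
    have xr: "x \<in> record_region d n X" using xg by (simp add: generators_def)
    have xc: "x \<in> unit_cube d" using xr by (simp add: record_region_def)
    have "\<forall>j. \<exists>i. j < d \<longrightarrow> i < n \<and> x j = X i j \<and> (\<forall>k<d. k \<noteq> j \<longrightarrow> x k < X i k)"
      using witness[OF xg] nz by blast
    then obtain f where f: "\<And>j. j < d \<Longrightarrow> f j < n \<and> x j = X (f j) j \<and> (\<forall>k<d. k \<noteq> j \<longrightarrow> x k < X (f j) k)"
      by metis
    define \<sigma> where "\<sigma> = restrict f {..<d}"
    have sv: "\<And>j. j < d \<Longrightarrow> \<sigma> j = f j" by (simp add: \<sigma>_def)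
    have inj: "inj_on \<sigma> {..<d}"
    proof (rule inj_onI)
      fix j j' assume j: "j \<in> {..<d}" and j': "j' \<in> {..<d}" and eq: "\<sigma> j = \<sigma> j'"
      show "j = j'"
      proof (rule ccontr)
        assume ne: "j \<noteq> j'"
        have "x j' < X (f j) j'" using f[of j] j j' ne by auto
        also have "\<dots> = X (f j') j'" using eq j j' by (simp add: sv)
        also have "\<dots> = x j'" using f[of j'] j' by simp
        finally show False by simp
      qed
    qed
    have s: "\<sigma> \<in> Sinj d n" using inj f by (auto simp: Sinj_def \<sigma>_def PiE_iff)
    have xx: "x = xs d \<sigma> X"
    proof (rule extensionalityI)
      show "x \<in> extensional {..<d}" using xc by (auto simp: unit_cube_def PiE_def)
      show "xs d \<sigma> X \<in> extensional {..<d}" by (simp add: xs_def)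
      fix j assume "j \<in> {..<d}"
      then show "x j = xs d \<sigma> X j" using f[of j] by (simp add: xs_def sv)
    qed
    have xv: "\<And>j. j < d \<Longrightarrow> X (\<sigma> j) j = x j" using f by (simp add: sv)
    have G: "Gd d n \<sigma> X"
      unfolding Gd_def
    proof (intro conjI allI impI)
      fix j assume j: "j < d"
      show "0 \<le> X (\<sigma> j) j" "X (\<sigma> j) j < 1" using xc j by (auto simp: xv unit_cube_def PiE_iff)
    next
      fix j k assume j: "j < d" and k: "k < d" and kj: "k \<noteq> j"
      have "x k < X (f j) k" using f[of j] j k kj by blast
      moreover have "x k = X (f k) k" using f[of k] k by blast
      ultimately show "X (\<sigma> k) k < X (\<sigma> j) k" using j k by (simp add: sv)
    next
      fix i assume i: "i < n"
      show "\<not> (\<forall>k<d. X (\<sigma> k) k < X i k)"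
        using xr i by (auto simp: record_region_def strict_dom_def xv)
    qed
    show "x \<in> (\<lambda>\<sigma>. xs d \<sigma> X) ` {\<sigma> \<in> Sinj d n. Gd d n \<sigma> X}"
      unfolding xx by (rule imageI) (simp add: s G)
  qed
qed

lemma xs_inj:
  assumes NT: "\<forall>i<n. \<forall>i'<n. \<forall>j<d. i \<noteq> i' \<longrightarrow> X i j \<noteq> X i' j"
  shows "inj_on (\<lambda>\<sigma>. xs d \<sigma> X) (Sinj d n)"
proof (rule inj_onI)
  fix \<sigma> \<tau> assume s: "\<sigma> \<in> Sinj d n" and t: "\<tau> \<in> Sinj d n" and eq: "xs d \<sigma> X = xs d \<tau> X"
  show "\<sigma> = \<tau>"
  proof (rule extensionalityI)
    show "\<sigma> \<in> extensional {..<d}" "\<tau> \<in> extensional {..<d}" using s t by (auto simp: Sinj_def PiE_def)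
    fix j assume j: "j \<in> {..<d}"
    have "X (\<sigma> j) j = X (\<tau> j) j" using fun_cong[OF eq, of j] j by (simp add: xs_def)
    moreover have "\<sigma> j < n" "\<tau> j < n" using s t j by (auto simp: Sinj_def)
    ultimately show "\<sigma> j = \<tau> j" using NT j by auto
  qed
qed

lemma card_IG:
  assumes NZ: "\<forall>i<n. \<forall>j<d. X i j \<noteq> 0"
    and NT: "\<forall>i<n. \<forall>i'<n. \<forall>j<d. i \<noteq> i' \<longrightarrow> X i j \<noteq> X i' j"
  shows "(of_nat (card (interior_generators d n X)) :: ennreal) = (\<Sum>\<sigma>\<in>Sinj d n. if Gd d n \<sigma> X then 1 else 0)"
proof -
  have fin: "finite (Sinj d n)" unfolding Sinj_def
    by (rule finite_subset[of _ "{..<d} \<rightarrow>\<^sub>E {..<n}"]) (auto intro: finite_PiE)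
  have "card (interior_generators d n X) = card {\<sigma> \<in> Sinj d n. Gd d n \<sigma> X}"
    unfolding IG_image[OF NZ] by (rule card_image, rule inj_on_subset[OF xs_inj[OF NT]]) auto
  then have "(of_nat (card (interior_generators d n X)) :: ennreal) = of_nat (\<Sum>\<sigma>\<in>{\<sigma> \<in> Sinj d n. Gd d n \<sigma> X}. 1)"
    by (simp only: card_eq_sum)
  also have "\<dots> = (\<Sum>\<sigma>\<in>{\<sigma> \<in> Sinj d n. Gd d n \<sigma> X}. 1)"
    by (simp only: of_nat_sum of_nat_1)
  also have "\<dots> = (\<Sum>\<sigma>\<in>Sinj d n. if Gd d n \<sigma> X then 1 else 0)"
    using fin by (rule sum.inter_filter)
  finally show ?thesis .
qed

lemma card_Sinj: "card (Sinj d n) = falling n d"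
  unfolding Sinj_def falling_def
  by (subst card_inj_on_subset_funcset) (auto simp: atLeast0LessThan)



lemma comp_integral:
  assumes j: "j \<in> J" and h: "h \<in> borel_measurable borel"
  shows "(\<integral>\<^sup>+ y. h (y j) \<partial>PiM J (\<lambda>_. U)) = integral\<^sup>N U h"
proof -
  have "integral\<^sup>N U h = integral\<^sup>N (distr (PiM J (\<lambda>_. U)) U (\<lambda>\<omega>. \<omega> j)) h"
    using distr_PiM_component[of J "\<lambda>_. U" j] prob_U j by simp
  also have "\<dots> = (\<integral>\<^sup>+ y. h (y j) \<partial>PiM J (\<lambda>_. U))"
    using j h by (intro nn_integral_distr measurable_component_singleton) auto
  finally show ?thesis by simp
qed

lemma row_integral:
  assumes i: "i \<in> I" and h: "h \<in> borel_measurable (PiM J (\<lambda>_. U))"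
  shows "(\<integral>\<^sup>+ X. h (X i) \<partial>PiM I (\<lambda>_. PiM J (\<lambda>_. U))) = integral\<^sup>N (PiM J (\<lambda>_. U)) h"
proof -
  have "integral\<^sup>N (PiM J (\<lambda>_. U)) h = integral\<^sup>N (distr (PiM I (\<lambda>_. PiM J (\<lambda>_. U))) (PiM J (\<lambda>_. U)) (\<lambda>\<omega>. \<omega> i)) h"
    using distr_PiM_component[of I "\<lambda>_. PiM J (\<lambda>_. U)" i, OF prob_Md i] by simp
  also have "\<dots> = (\<integral>\<^sup>+ X. h (X i) \<partial>PiM I (\<lambda>_. PiM J (\<lambda>_. U)))"
    using i h by (intro nn_integral_distr measurable_component_singleton) auto
  finally show ?thesis by simp
qed

lemma single_null: "j \<in> J \<Longrightarrow> (\<integral>\<^sup>+ y. indicator {c} (y j) \<partial>PiM J (\<lambda>_. U)) = 0"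
  by (subst comp_integral) (auto simp: emeasure_U_single simp del: emeasure_uniform_measure)

lemma zero_null:
  assumes i: "i \<in> I" and j: "j \<in> J"
  shows "(\<integral>\<^sup>+ X. indicator {0} (X i j) \<partial>PiM I (\<lambda>_. PiM J (\<lambda>_. U))) = 0"
proof -
  have "(\<lambda>y. indicator {0::real} (y j) :: ennreal) \<in> borel_measurable (PiM J (\<lambda>_. U))"
    by (intro measurable_compose[OF comp1_any] borel_measurable_indicator) auto
  then show ?thesis using i j single_null[OF j] by (subst row_integral) auto
qed

lemma tie_null:
  fixes I J :: "nat set"
  assumes i: "i \<in> I" and i': "i' \<in> I" and ii: "i \<noteq> i'" and j: "j \<in> J"
  shows "(\<integral>\<^sup>+ X. indicator {X i' j} (X i j) \<partial>PiM I (\<lambda>_. PiM J (\<lambda>_. U))) = 0"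
proof -
  interpret psf: product_sigma_finite "\<lambda>_::nat. PiM J (\<lambda>_. U)"
  proof -
    interpret prob_space "PiM J (\<lambda>_. U)" by (rule prob_Md)
    show "product_sigma_finite (\<lambda>_::nat. PiM J (\<lambda>_. U))" by unfold_locales
  qed
  define f where "f t = (if t = (0::nat) then i else i')" for t
  define g where "g \<omega> = (indicator {\<omega> 1 j} (\<omega> 0 j) :: ennreal)" for \<omega> :: "nat \<Rightarrow> nat \<Rightarrow> real"
  have gm: "g \<in> borel_measurable (PiM {0, 1} (\<lambda>_. PiM J (\<lambda>_. U)))"
  proof -
    have "g = (\<lambda>\<omega>. if \<omega> 0 j = \<omega> 1 j then 1 else 0)" by (auto simp: g_def fun_eq_iff)
    also have "\<dots> \<in> borel_measurable (PiM {0, 1} (\<lambda>_. PiM J (\<lambda>_. U)))"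
      by (rule measurable_If[OF _ _ predE]; (intro borel_measurable_const pred_intros_logic(6)
         borel_measurable_pred_less comp2_any)?) (auto simp: pred_def intro!: borel_measurable_eq comp2_any)
    finally show ?thesis .
  qed
  have "integral\<^sup>N (PiM {0, 1} (\<lambda>_. PiM J (\<lambda>_. U))) g
      = (\<integral>\<^sup>+ \<omega>. g (\<lambda>n\<in>{0, 1}. \<omega> (f n)) \<partial>PiM I (\<lambda>_. PiM J (\<lambda>_. U)))"
    by (rule nn_integral_reindex[OF prob_Md _ _ gm]) (use i i' ii in \<open>auto simp: f_def inj_on_def\<close>)
  also have "\<dots> = (\<integral>\<^sup>+ X. indicator {X i' j} (X i j) \<partial>PiM I (\<lambda>_. PiM J (\<lambda>_. U)))"
    by (simp add: g_def f_def)
  finally have eq: "(\<integral>\<^sup>+ X. indicator {X i' j} (X i j) \<partial>PiM I (\<lambda>_. PiM J (\<lambda>_. U))) = integral\<^sup>N (PiM {0, 1} (\<lambda>_. PiM J (\<lambda>_. U))) g" by simp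
  have "integral\<^sup>N (PiM (insert 0 {1}) (\<lambda>_. PiM J (\<lambda>_. U))) g
      = (\<integral>\<^sup>+ x. (\<integral>\<^sup>+ y. g (x(0 := y)) \<partial>PiM J (\<lambda>_. U)) \<partial>PiM {1} (\<lambda>_. PiM J (\<lambda>_. U)))"
    using gm by (intro psf.product_nn_integral_insert) auto
  also have "\<dots> = (\<integral>\<^sup>+ x. (0::ennreal) \<partial>PiM {1::nat} (\<lambda>_. PiM J (\<lambda>_. U)))"
    by (rule nn_integral_cong) (simp add: g_def single_null[OF j])
  finally show ?thesis using eq by simp
qed

lemma AE_good:
  fixes n d :: nat
  shows "AE X in PiM {..<n} (\<lambda>_. PiM {..<d} (\<lambda>_. U)).
     (\<forall>i<n. \<forall>j<d. X i j \<noteq> 0) \<and> (\<forall>i<n. \<forall>i'<n. \<forall>j<d. i \<noteq> i' \<longrightarrow> X i j \<noteq> X i' j)"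
proof -
  let ?M = "PiM {..<n} (\<lambda>_. PiM {..<d} (\<lambda>_. U))"
  have z: "AE X in ?M. X i j \<noteq> 0" if "i < n" "j < d" for i j
  proof -
    have m: "(\<lambda>X. indicator {0} (X i j) :: ennreal) \<in> borel_measurable ?M"
    proof -
      have "(\<lambda>X. X i j) \<in> borel_measurable ?M" by (rule comp2_any)
      then show ?thesis by (rule measurable_compose) (rule borel_measurable_indicator, simp)
    qed
    have "AE X in ?M. indicator {0} (X i j) = (0::ennreal)"
      using zero_null[of i "{..<n}" j "{..<d}"] that by (subst nn_integral_0_iff_AE[OF m, symmetric]) auto
    then show ?thesis by eventually_elim (auto simp: indicator_def split: if_splits)
  qed
  have t: "AE X in ?M. X i j \<noteq> X i' j" if "i < n" "i' < n" "i \<noteq> i'" "j < d" for i i' j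
  proof -
    have m: "(\<lambda>X. indicator {X i' j} (X i j) :: ennreal) \<in> borel_measurable ?M"
    proof -
      have "(\<lambda>X. indicator {X i' j} (X i j) :: ennreal) = (\<lambda>X. if X i j = X i' j then 1 else 0)"
        by (auto simp: fun_eq_iff)
      also have "\<dots> \<in> borel_measurable ?M"
        by (rule measurable_If[OF _ _ predE]) (auto simp: pred_def intro!: borel_measurable_eq comp2_any)
      finally show ?thesis .
    qed
    have "AE X in ?M. indicator {X i' j} (X i j) = (0::ennreal)"
      using tie_null[of i "{..<n}" i' j "{..<d}"] that by (subst nn_integral_0_iff_AE[OF m, symmetric]) auto
    then show ?thesis by eventually_elim (auto simp: indicator_def split: if_splits)
  qed
  have A1: "AE X in ?M. \<forall>i<n. \<forall>j<d. X i j \<noteq> 0"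
    unfolding AE_all_countable
  proof (intro allI)
    fix i show "AE X in ?M. i < n \<longrightarrow> (\<forall>j<d. X i j \<noteq> 0)"
    proof (cases "i < n")
      case True
      have "AE X in ?M. \<forall>j. j < d \<longrightarrow> X i j \<noteq> 0"
        unfolding AE_all_countable
      proof
        fix j show "AE X in ?M. j < d \<longrightarrow> X i j \<noteq> 0"
          by (cases "j < d") (use z[OF True] in auto)
      qed
      then show ?thesis by simp
    qed simp
  qed
  have A2: "AE X in ?M. \<forall>i<n. \<forall>i'<n. \<forall>j<d. i \<noteq> i' \<longrightarrow> X i j \<noteq> X i' j"
    unfolding AE_all_countable
  proof (intro allI)
    fix i show "AE X in ?M. i < n \<longrightarrow> (\<forall>i'<n. \<forall>j<d. i \<noteq> i' \<longrightarrow> X i j \<noteq> X i' j)"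
    proof (cases "i < n")
      case True
      have "AE X in ?M. \<forall>i'. i' < n \<longrightarrow> (\<forall>j<d. i \<noteq> i' \<longrightarrow> X i j \<noteq> X i' j)"
        unfolding AE_all_countable
      proof
        fix i' show "AE X in ?M. i' < n \<longrightarrow> (\<forall>j<d. i \<noteq> i' \<longrightarrow> X i j \<noteq> X i' j)"
        proof (cases "i' < n \<and> i \<noteq> i'")
          case True2: True
          have "AE X in ?M. \<forall>j. j < d \<longrightarrow> X i j \<noteq> X i' j"
            unfolding AE_all_countable
          proof
            fix j show "AE X in ?M. j < d \<longrightarrow> X i j \<noteq> X i' j"
              by (cases "j < d") (use t[OF True] True2 in auto)
          qed
          then show ?thesis by eventually_elim auto
        qed auto
      qed
      then show ?thesis by simp
    qed simp
  qed
  from A1 A2 show ?thesis by eventually_elim auto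
qed



lemma pred_le2: "f \<in> borel_measurable M \<Longrightarrow> g \<in> borel_measurable M \<Longrightarrow> Measurable.pred M (\<lambda>x. (f x::real) \<le> g x)"
  unfolding Measurable.pred_def by (rule borel_measurable_le)
lemma pred_conj2: "Measurable.pred M P \<Longrightarrow> Measurable.pred M Q \<Longrightarrow> Measurable.pred M (\<lambda>x. P x \<and> Q x)"
  by (rule pred_intros_logic(3))
lemma pred_not2: "Measurable.pred M P \<Longrightarrow> Measurable.pred M (\<lambda>x. \<not> P x)"
  by (rule pred_intros_logic(2))

lemma Gd_meas:
  "(\<lambda>X. if Gd d n \<sigma> X then 1 else 0 :: ennreal) \<in> borel_measurable (PiM I (\<lambda>_. PiM {..<d} (\<lambda>_. U)))"
  unfolding Gd_def
  by (rule measurable_If[OF _ _ predE]; (intro pred_conj2 pred_not2 pred_intros_countable pred_intros_imp'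
     borel_measurable_pred_less pred_le2 comp2_any borel_measurable_const)?)

lemma g_meas_U:
  fixes d :: nat
  shows "(\<lambda>x. if \<forall>k<d. 0 \<le> x k \<and> x k < 1 then ennreal (1 - (\<Prod>k<d. 1 - x k)) ^ m else 0)
     \<in> borel_measurable (PiM J (\<lambda>_. U))"
  by (rule measurable_If[OF _ _ predE]; (intro pred_conj2 pred_intros_countable pred_intros_imp'
     borel_measurable_pred_less pred_le2 comp1_any borel_measurable_const
     borel_measurable_power_ennreal measurable_compose[OF _ measurable_ennreal] borel_measurable_diff
     borel_measurable_prod)?)

lemma g_meas_lborel:
  fixes d :: nat
  shows "(\<lambda>x. (if \<forall>k<d. 0 \<le> x k \<and> x k < 1 then ennreal (1 - (\<Prod>k<d. 1 - x k)) ^ m else 0) * (\<Prod>k<d. ennreal (1 - x k)) ^ (d - 1))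
     \<in> borel_measurable (PiM J (\<lambda>_. lborel))"
  by (intro borel_measurable_times_ennreal;
      (rule measurable_If[OF _ _ predE]; (intro pred_conj2 pred_intros_countable pred_intros_imp'
     borel_measurable_pred_less pred_le2 comp1_any_lborel borel_measurable_const
     borel_measurable_power_ennreal measurable_compose[OF _ measurable_ennreal] borel_measurable_diff
     borel_measurable_prod)?)?;
      (intro borel_measurable_power_ennreal borel_measurable_prod_ennreal measurable_compose[OF _ measurable_ennreal]
        borel_measurable_diff borel_measurable_const comp1_any_lborel)?)



lemma emeasure_S:
  fixes d :: nat
  assumes c: "\<And>k. k < d \<Longrightarrow> 0 \<le> c k \<and> c k < 1"
  shows "emeasure (PiM {..<d} (\<lambda>_. U)) {y \<in> space (PiM {..<d} (\<lambda>_. U)). \<not> (\<forall>k<d. c k < y k)}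
       = ennreal (1 - (\<Prod>k<d. 1 - c k))"
proof -
  let ?M = "PiM {..<d} (\<lambda>_. U)"
  interpret P: prob_space ?M by (rule prob_Md)
  let ?T = "{y \<in> space ?M. \<forall>k\<in>{..<d}. c k < y k}"
  have Tm: "?T \<in> sets ?M"
    by (rule predE; intro pred_intros_countable_bounded borel_measurable_pred_less comp1_any borel_measurable_const)
  have eq: "{y \<in> space ?M. \<not> (\<forall>k<d. c k < y k)} = space ?M - ?T" by auto
  have "emeasure ?M ?T = (\<Prod>k<d. ennreal (1 - c k))"
    using emeasure_Md_box[of "{..<d}" c] c by auto
  also have "\<dots> = ennreal (\<Prod>k<d. 1 - c k)"
  proof (intro prod_ennreal)
    fix k assume "k \<in> {..<d}" then show "0 \<le> 1 - c k" using c[of k] by auto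
  qed
  finally have T: "emeasure ?M ?T = ennreal (\<Prod>k<d. 1 - c k)" .
  have p0: "0 \<le> (\<Prod>k<d. 1 - c k)"
  proof (intro prod_nonneg)
    fix k assume "k \<in> {..<d}" then show "0 \<le> 1 - c k" using c[of k] by auto
  qed
  show ?thesis
    unfolding eq using Tm T p0
    by (subst emeasure_compl) (auto simp: P.emeasure_space_1 ennreal_minus[symmetric])
qed

lemma prod_if01:
  assumes "finite B"
  shows "(\<Prod>i\<in>B. if P i then (1::ennreal) else 0) = (if \<forall>i\<in>B. P i then 1 else 0)"
  using assms by (auto intro!: prod.neutral)

lemma sigma_integral:
  fixes d n :: nat
  assumes s: "\<sigma> \<in> Sinj d n"
  shows "(\<integral>\<^sup>+ X. (if Gd d n \<sigma> X then 1 else 0) \<partial>PiM {..<n} (\<lambda>_. PiM {..<d} (\<lambda>_. U)))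
   = (\<integral>\<^sup>+ x \<in> unit_cube d. ennreal ((\<Prod>j<d. 1 - x j) ^ (d - 1) * (1 - (\<Prod>j<d. 1 - x j)) ^ (n - d))
        \<partial>PiM {..<d} (\<lambda>_. lborel))"
proof -
  let ?Md = "PiM {..<d} (\<lambda>_. U)"
  interpret psf: product_sigma_finite "\<lambda>_::nat. ?Md"
  proof -
    interpret prob_space ?Md by (rule prob_Md)
    show "product_sigma_finite (\<lambda>_::nat. ?Md)" by unfold_locales
  qed
  define A where "A = \<sigma> ` {..<d}"
  define B where "B = {..<n} - A"
  have sn: "\<And>j. j < d \<Longrightarrow> \<sigma> j < n" and inj: "inj_on \<sigma> {..<d}" using s by (auto simp: Sinj_def)
  have AN: "A \<subseteq> {..<n}" using sn by (auto simp: A_def)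
  have finA: "finite A" and finB: "finite B" by (auto simp: A_def B_def)
  have AB: "A \<inter> B = {}" by (auto simp: B_def)
  have N: "{..<n} = A \<union> B" using AN by (auto simp: B_def)
  have cardA: "card A = d" using inj by (simp add: A_def card_image)
  have cardB: "card B = n - d" using AN finA cardA by (simp add: B_def card_Diff_subset)
  have sA: "\<And>k. k < d \<Longrightarrow> \<sigma> k \<in> A" by (auto simp: A_def)
  define Q where "Q a \<longleftrightarrow> (\<forall>j<d. 0 \<le> a (\<sigma> j) j \<and> a (\<sigma> j) j < 1) \<and>
      (\<forall>j<d. \<forall>k<d. k \<noteq> j \<longrightarrow> a (\<sigma> k) k < a (\<sigma> j) k)" for a :: "nat \<Rightarrow> nat \<Rightarrow> real"
  define F where "F a = (if Q a then ennreal (1 - (\<Prod>k<d. 1 - a (\<sigma> k) k)) ^ (n - d) else 0)" for a :: "nat \<Rightarrow> nat \<Rightarrow> real"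
  define g where "g x = (if \<forall>k<d. 0 \<le> x k \<and> x k < 1 then ennreal (1 - (\<Prod>k<d. 1 - x k)) ^ (n - d) else 0)"
    for x :: "nat \<Rightarrow> real"
  define h where "h W = (if \<forall>j<d. \<forall>k<d. k \<noteq> j \<longrightarrow> W k k < W j k then g (\<lambda>j\<in>{..<d}. W j j) else 0)"
    for W :: "nat \<Rightarrow> nat \<Rightarrow> real"
  have gm: "g \<in> borel_measurable ?Md" unfolding g_def by (rule g_meas_U)
  have diagm: "(\<lambda>W. \<lambda>j\<in>{..<d}. W j j) \<in> measurable (PiM {..<d} (\<lambda>_. ?Md)) ?Md"
    by (intro measurable_restrict comp2_N) auto
  have hm: "h \<in> borel_measurable (PiM {..<d} (\<lambda>_. ?Md))"
    unfolding h_def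
    by (rule measurable_If[OF _ _ predE]; (intro pred_intros_countable pred_intros_imp' borel_measurable_pred_less comp2_any borel_measurable_const
      measurable_compose[OF diagm gm])?)
  have "(\<integral>\<^sup>+ X. (if Gd d n \<sigma> X then 1 else 0) \<partial>PiM {..<n} (\<lambda>_. ?Md))
      = (\<integral>\<^sup>+ a. (\<integral>\<^sup>+ b. (if Gd d n \<sigma> (merge A B (a, b)) then 1 else 0) \<partial>PiM B (\<lambda>_. ?Md)) \<partial>PiM A (\<lambda>_. ?Md))"
    unfolding N by (rule psf.product_nn_integral_fold[OF AB finA finB Gd_meas])
  also have "\<dots> = (\<integral>\<^sup>+ a. F a \<partial>PiM A (\<lambda>_. ?Md))"
  proof (rule nn_integral_cong)
    fix a assume a: "a \<in> space (PiM A (\<lambda>_. ?Md))"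
    define c where "c k = a (\<sigma> k) k" for k
    define S where "S = {y \<in> space ?Md. \<not> (\<forall>k<d. c k < y k)}"
    have Sm: "S \<in> sets ?Md"
      unfolding S_def
      by (rule predE; intro pred_not2 pred_intros_countable pred_intros_imp' borel_measurable_pred_less comp1_any borel_measurable_const)
    have integrand: "(if Gd d n \<sigma> (merge A B (a, b)) then 1 else 0)
        = (if Q a then 1 else 0) * (\<Prod>i\<in>B. indicator S (b i) :: ennreal)"
      if b: "b \<in> space (PiM B (\<lambda>_. ?Md))" for b
    proof -
      have mA: "merge A B (a, b) (\<sigma> k) = a (\<sigma> k)" if "k < d" for k
        using sA[OF that] by (simp add: merge_def)
      have mB: "merge A B (a, b) i = b i" if "i \<in> B" for i
        using that AB by (auto simp: merge_def)
      have bi: "b i \<in> space ?Md" if "i \<in> B" for i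
        using b that by (auto simp: space_PiM PiE_iff)
      have "Gd d n \<sigma> (merge A B (a, b)) \<longleftrightarrow> Q a \<and> (\<forall>i\<in>B. b i \<in> S)"
      proof -
        have 1: "(\<forall>j<d. 0 \<le> merge A B (a, b) (\<sigma> j) j \<and> merge A B (a, b) (\<sigma> j) j < 1) \<and>
          (\<forall>j<d. \<forall>k<d. k \<noteq> j \<longrightarrow> merge A B (a, b) (\<sigma> k) k < merge A B (a, b) (\<sigma> j) k) \<longleftrightarrow> Q a"
          by (simp add: Q_def mA)
        have 2: "(\<forall>i<n. \<not> (\<forall>k<d. merge A B (a, b) (\<sigma> k) k < merge A B (a, b) i k))
            \<longleftrightarrow> (\<forall>i\<in>B. b i \<in> S)"
        proof
          assume H: "\<forall>i<n. \<not> (\<forall>k<d. merge A B (a, b) (\<sigma> k) k < merge A B (a, b) i k)"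
          show "\<forall>i\<in>B. b i \<in> S"
          proof
            fix i assume i: "i \<in> B"
            then have "i < n" by (auto simp: B_def)
            with H have "\<not> (\<forall>k<d. merge A B (a, b) (\<sigma> k) k < merge A B (a, b) i k)" by blast
            then show "b i \<in> S" using bi[OF i] by (simp add: S_def c_def mA mB[OF i])
          qed
        next
          assume H: "\<forall>i\<in>B. b i \<in> S"
          show "\<forall>i<n. \<not> (\<forall>k<d. merge A B (a, b) (\<sigma> k) k < merge A B (a, b) i k)"
          proof (intro allI impI)
            fix i assume i: "i < n"
            show "\<not> (\<forall>k<d. merge A B (a, b) (\<sigma> k) k < merge A B (a, b) i k)"
            proof (cases "i \<in> A")
              case True
              then obtain j where j: "j < d" "i = \<sigma> j" by (auto simp: A_def)
              then show ?thesis by auto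
            next
              case False
              then have iB: "i \<in> B" using i by (auto simp: B_def)
              then have "b i \<in> S" using H by blast
              then show ?thesis by (simp add: S_def c_def mA mB[OF iB])
            qed
          qed
        qed
        show ?thesis unfolding Gd_def using 1 2 by blast
      qed
      moreover have "(\<Prod>i\<in>B. indicator S (b i) :: ennreal) = (if \<forall>i\<in>B. b i \<in> S then 1 else 0)"
        using finB by (auto simp: indicator_def intro!: prod.neutral)
      ultimately show ?thesis by simp
    qed
    have "(\<integral>\<^sup>+ b. (if Gd d n \<sigma> (merge A B (a, b)) then 1 else 0) \<partial>PiM B (\<lambda>_. ?Md))
        = (\<integral>\<^sup>+ b. (if Q a then 1 else 0) * (\<Prod>i\<in>B. indicator S (b i) :: ennreal) \<partial>PiM B (\<lambda>_. ?Md))"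
      by (rule nn_integral_cong) (rule integrand)
    also have "\<dots> = (if Q a then 1 else 0) * (\<integral>\<^sup>+ b. (\<Prod>i\<in>B. indicator S (b i) :: ennreal) \<partial>PiM B (\<lambda>_. ?Md))"
    proof (rule nn_integral_cmult)
      show "(\<lambda>b. \<Prod>i\<in>B. indicator S (b i) :: ennreal) \<in> borel_measurable (PiM B (\<lambda>_. ?Md))"
      proof (rule borel_measurable_prod_ennreal)
        fix i assume i: "i \<in> B"
        have "(\<lambda>b. b i) \<in> measurable (PiM B (\<lambda>_. ?Md)) ?Md" using i by (rule measurable_component_singleton)
        from measurable_compose[OF this borel_measurable_indicator[OF Sm]]
        show "(\<lambda>b. indicator S (b i) :: ennreal) \<in> borel_measurable (PiM B (\<lambda>_. ?Md))" .
      qed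
    qed
    also have "\<dots> = (if Q a then 1 else 0) * (\<Prod>i\<in>B. emeasure ?Md S)"
      using finB Sm by (subst psf.product_nn_integral_prod) (auto intro: borel_measurable_indicator)
    also have "\<dots> = F a"
    proof (cases "Q a")
      case True
      then have "\<And>k. k < d \<Longrightarrow> 0 \<le> c k \<and> c k < 1" by (auto simp: Q_def c_def)
      then have "emeasure ?Md S = ennreal (1 - (\<Prod>k<d. 1 - c k))"
        unfolding S_def by (rule emeasure_S)
      then show ?thesis using True cardB by (simp add: F_def c_def)
    next
      case False
      then show ?thesis by (simp add: F_def)
    qed
    finally show "(\<integral>\<^sup>+ b. (if Gd d n \<sigma> (merge A B (a, b)) then 1 else 0) \<partial>PiM B (\<lambda>_. ?Md)) = F a" .
  qed
  also have "\<dots> = integral\<^sup>N (PiM {..<d} (\<lambda>_. ?Md)) h"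
  proof -
    have "integral\<^sup>N (PiM {..<d} (\<lambda>_. ?Md)) h = (\<integral>\<^sup>+ a. h (\<lambda>j\<in>{..<d}. a (\<sigma> j)) \<partial>PiM A (\<lambda>_. ?Md))"
      by (rule nn_integral_reindex[OF prob_Md inj _ hm]) (auto simp: A_def)
    also have "\<dots> = (\<integral>\<^sup>+ a. F a \<partial>PiM A (\<lambda>_. ?Md))"
    proof (rule nn_integral_cong)
      fix a :: "nat \<Rightarrow> nat \<Rightarrow> real"
      have d1: "(\<lambda>j\<in>{..<d}. (\<lambda>j\<in>{..<d}. a (\<sigma> j)) j j) = (\<lambda>j\<in>{..<d}. a (\<sigma> j) j)"
        by (auto simp: fun_eq_iff)
      have p: "(\<Prod>k<d. 1 - (\<lambda>j\<in>{..<d}. a (\<sigma> j) j) k) = (\<Prod>k<d. 1 - a (\<sigma> k) k)"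
        by (intro prod.cong) auto
      have o: "(\<forall>j<d. \<forall>k<d. k \<noteq> j \<longrightarrow> (\<lambda>j\<in>{..<d}. a (\<sigma> j)) k k < (\<lambda>j\<in>{..<d}. a (\<sigma> j)) j k)
          \<longleftrightarrow> (\<forall>j<d. \<forall>k<d. k \<noteq> j \<longrightarrow> a (\<sigma> k) k < a (\<sigma> j) k)"
        by auto
      have c: "(\<forall>k<d. 0 \<le> (\<lambda>j\<in>{..<d}. a (\<sigma> j) j) k \<and> (\<lambda>j\<in>{..<d}. a (\<sigma> j) j) k < 1)
          \<longleftrightarrow> (\<forall>j<d. 0 \<le> a (\<sigma> j) j \<and> a (\<sigma> j) j < 1)"
        by auto
      show "h (\<lambda>j\<in>{..<d}. a (\<sigma> j)) = F a"
        unfolding h_def g_def F_def Q_def d1 p o c by auto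
    qed
    finally show ?thesis by simp
  qed
  also have "\<dots> = (\<integral>\<^sup>+ x. g x * (\<Prod>k<d. ennreal (1 - x k)) ^ (d - 1) \<partial>?Md)"
    unfolding h_def by (rule core[OF gm]) (auto simp: g_def)
  also have "\<dots> = (\<integral>\<^sup>+ x \<in> PiE {..<d} (\<lambda>_. {0..<1}). g x * (\<Prod>k<d. ennreal (1 - x k)) ^ (d - 1) \<partial>PiM {..<d} (\<lambda>_. lborel))"
    by (rule nn_integral_U_cube) (auto simp: g_def intro: g_meas_lborel)
  also have "\<dots> = (\<integral>\<^sup>+ x \<in> unit_cube d. ennreal ((\<Prod>j<d. 1 - x j) ^ (d - 1) * (1 - (\<Prod>j<d. 1 - x j)) ^ (n - d))
        \<partial>PiM {..<d} (\<lambda>_. lborel))"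
    unfolding unit_cube_def
  proof (rule nn_integral_cong)
    fix x :: "nat \<Rightarrow> real"
    show "g x * (\<Prod>k<d. ennreal (1 - x k)) ^ (d - 1) * indicator (PiE {..<d} (\<lambda>_. {0..<1})) x
      = ennreal ((\<Prod>j<d. 1 - x j) ^ (d - 1) * (1 - (\<Prod>j<d. 1 - x j)) ^ (n - d)) * indicator (PiE {..<d} (\<lambda>_. {0..<1})) x"
    proof (cases "x \<in> PiE {..<d} (\<lambda>_. {0..<1})")
      case True
      then have x01: "\<And>k. k < d \<Longrightarrow> 0 \<le> x k \<and> x k < 1" by (auto simp: PiE_iff)
      define P where "P = (\<Prod>j<d. 1 - x j)"
      have P0: "0 \<le> P" unfolding P_def
      proof (intro prod_nonneg)
        fix k assume "k \<in> {..<d}" then show "0 \<le> 1 - x k" using x01[of k] by auto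
      qed
      have P1: "P \<le> 1" unfolding P_def
      proof (intro prod_le_1)
        fix k assume "k \<in> {..<d}" then show "0 \<le> 1 - x k \<and> 1 - x k \<le> 1" using x01[of k] by auto
      qed
      have gx: "g x = ennreal ((1 - P) ^ (n - d))"
        using x01 P1 by (simp add: g_def P_def ennreal_power)
      have "(\<Prod>k<d. ennreal (1 - x k)) = ennreal P"
        unfolding P_def
      proof (intro prod_ennreal)
        fix k assume "k \<in> {..<d}" then show "0 \<le> 1 - x k" using x01[of k] by auto
      qed
      then have pr: "(\<Prod>k<d. ennreal (1 - x k)) ^ (d - 1) = ennreal (P ^ (d - 1))"
        using P0 by (simp add: ennreal_power)
      have "g x * (\<Prod>k<d. ennreal (1 - x k)) ^ (d - 1) = ennreal ((1 - P) ^ (n - d)) * ennreal (P ^ (d - 1))"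
        by (simp only: gx pr)
      also have "\<dots> = ennreal (P ^ (d - 1) * (1 - P) ^ (n - d))"
        using P0 P1 by (subst ennreal_mult[symmetric]) (auto simp: mult.commute)
      finally show ?thesis using True by (simp add: P_def)
    qed simp
  qed
  finally show ?thesis .
qed



theorem lemmaL:
  fixes d n :: nat
  assumes "d \<ge> 1"
  shows "I_dn d n =
    ennreal (real (falling n d)) *
    (\<integral>\<^sup>+ x \<in> unit_cube d.
        ennreal ((\<Prod>j<d. 1 - x j) ^ (d - 1) * (1 - (\<Prod>j<d. 1 - x j)) ^ (n - d))
      \<partial>(PiM {..<d} (\<lambda>_. lborel)))"
proof -
  let ?J = "(\<integral>\<^sup>+ x \<in> unit_cube d.
        ennreal ((\<Prod>j<d. 1 - x j) ^ (d - 1) * (1 - (\<Prod>j<d. 1 - x j)) ^ (n - d))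
      \<partial>(PiM {..<d} (\<lambda>_. lborel)))"
  let ?M = "PiM {..<n} (\<lambda>_. PiM {..<d} (\<lambda>_. U))"
  have fin: "finite (Sinj d n)" unfolding Sinj_def
    by (rule finite_subset[of _ "{..<d} \<rightarrow>\<^sub>E {..<n}"]) (auto intro: finite_PiE)
  have "I_dn d n = (\<integral>\<^sup>+ X. of_nat (card (interior_generators d n X)) \<partial>?M)"
    by (simp add: I_dn_def obs_measure_def)
  also have "\<dots> = (\<integral>\<^sup>+ X. (\<Sum>\<sigma>\<in>Sinj d n. if Gd d n \<sigma> X then 1 else 0) \<partial>?M)"
  proof (rule nn_integral_cong_AE)
    show "AE X in ?M. (of_nat (card (interior_generators d n X)) :: ennreal) = (\<Sum>\<sigma>\<in>Sinj d n. if Gd d n \<sigma> X then 1 else 0)"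
    proof (rule AE_mp[OF AE_good[of n d]], rule AE_I2)
      fix X :: "nat \<Rightarrow> nat \<Rightarrow> real"
      show "(\<forall>i<n. \<forall>j<d. X i j \<noteq> 0) \<and> (\<forall>i<n. \<forall>i'<n. \<forall>j<d. i \<noteq> i' \<longrightarrow> X i j \<noteq> X i' j) \<longrightarrow>
         (of_nat (card (interior_generators d n X)) :: ennreal) = (\<Sum>\<sigma>\<in>Sinj d n. if Gd d n \<sigma> X then 1 else 0)"
        by (intro impI card_IG) auto
    qed
  qed
  also have "\<dots> = (\<Sum>\<sigma>\<in>Sinj d n. (\<integral>\<^sup>+ X. (if Gd d n \<sigma> X then 1 else 0) \<partial>?M))"
    by (rule nn_integral_sum) (rule Gd_meas)
  also have "\<dots> = (\<Sum>\<sigma>\<in>Sinj d n. ?J)"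
    by (intro sum.cong refl sigma_integral)
  also have "\<dots> = of_nat (card (Sinj d n)) * ?J" by simp
  also have "\<dots> = ennreal (real (falling n d)) * ?J"
    by (simp add: card_Sinj ennreal_of_nat_eq_real_of_nat)
  finally show ?thesis .
qed


end
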